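(* Let $(a_k)_{k\ge 0}$ and $(\lambda_k)_{k\ge 1}$ be complex numbers, and define $\mu_0=1$ and, for $n\ge 1$, $\mu_n=\sum_{\pi\in\mathcal{M}_n} v(\pi)$. Let $(c_n)_{n\ge1}$ be the free cumulants of $(\mu_n)$. Then for every $n\ge 2$, $$c_n=\sum_{\pi\in\mathcal{M}_n}\frac{(-1)^{|\pi|_0-1}}{n-1}\binom{n-1}{|\pi|_0}\,v(\pi).$$ (In particular the path consisting of $n$ horizontal steps contributes $0$, since then $|\pi|_0=n$.)
   Context: A Motzkin path of length $n$ is a sequence of integers $\pi=(\pi(0),\pi(1),\dots,\pi(n))$ with $\pi(0)=\pi(n)=0$, $\pi(i)\ge 0$ for all $i$, and $\pi(i)-\pi(i-1)\in\{1,0,-1\}$ for $i=1,\dots,n$ (rising, horizontal, falling step respectively). $\mathcal{M}_n$ denotes the set of Motzkin paths of length $n$. The valuation of a path is $v(\pi)=\prod_{i=1}^n v_i$, where $v_i=1$ if the $i$-th step rises, $v_i=a_{\pi(i-1)}$ if the $i$-th step is horizontal, and $v_i=\lambda_{\pi(i-1)}$ if the $i$-th step falls. $|\pi|_0$ denotes the number of returns to zero of $\pi$, i.e. the number of indices $i\in\{1,\dots,n\}$ with $\pi(i)=0$. Free cumulants: with $M(z)=1+\sum_{n\ge1}\mu_n z^n$ (formal power series), the free cumulants $c_n$ are the coefficients of the formal power series $C(z)=1+\sum_{n\ge1}c_nz^n$ uniquely determined by $C(zM(z))=M(z)$. *)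

theory Defs
  imports Complex_Main "HOL-Computational_Algebra.Formal_Power_Series"
begin

text \<open>A Motzkin path of length n is represented by the list of its heights
  [pi(0), pi(1), ..., pi(n)] (a list of length n+1).\<close>

definition motzkin_paths :: "nat \<Rightarrow> int list set" where
  "motzkin_paths n = {p. length p = Suc n \<and> p ! 0 = 0 \<and> p ! n = 0 \<and>
      (\<forall>i\<le>n. p ! i \<ge> 0) \<and>
      (\<forall>i\<in>{1..n}. p ! i - p ! (i - 1) \<in> {1, 0, -1})}"

definition step_val :: "(nat \<Rightarrow> complex) \<Rightarrow> (nat \<Rightarrow> complex) \<Rightarrow> int list \<Rightarrow> nat \<Rightarrow> complex" where
  "step_val a lam p i =
     (if p ! i - p ! (i - 1) = 1 then 1
      else if p ! i - p ! (i - 1) = 0 then a (nat (p ! (i - 1)))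
      else lam (nat (p ! (i - 1))))"

definition path_val :: "(nat \<Rightarrow> complex) \<Rightarrow> (nat \<Rightarrow> complex) \<Rightarrow> int list \<Rightarrow> complex" where
  "path_val a lam p = (\<Prod>i\<in>{1..length p - 1}. step_val a lam p i)"

definition returns0 :: "int list \<Rightarrow> nat" where
  "returns0 p = card {i\<in>{1..length p - 1}. p ! i = 0}"

definition moment :: "(nat \<Rightarrow> complex) \<Rightarrow> (nat \<Rightarrow> complex) \<Rightarrow> nat \<Rightarrow> complex" where
  "moment a lam n = (if n = 0 then 1 else (\<Sum>p\<in>motzkin_paths n. path_val a lam p))"

definition free_cumulant :: "(nat \<Rightarrow> complex) \<Rightarrow> nat \<Rightarrow> complex" where
  "free_cumulant mu n = fps_nth
     (THE C. fps_nth C 0 = 1 \<and> fps_compose C (fps_X * Abs_fps mu) = Abs_fps mu) n"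

end

theory Submission
  imports Defs
begin

unbundle fps_syntax



lemma fps_of_nat_mult_nth: "(of_nat k * (f::complex fps)) $ i = of_nat k * f $ i"
  by (simp add: fps_of_nat)

lemma Mderiv:
  fixes M \<psi> :: "complex fps"
  assumes Mpsi: "M * \<psi> = 1"
  shows "fps_deriv M = - (M^2 * fps_deriv \<psi>)"
proof -
  have "fps_deriv (M * \<psi>) = 0" using Mpsi by simp
  hence "fps_deriv M * \<psi> + M * fps_deriv \<psi> = 0" by (simp add: algebra_simps)
  hence "M * (fps_deriv M * \<psi> + M * fps_deriv \<psi>) = 0" by simp
  hence "fps_deriv M * (M * \<psi>) + M^2 * fps_deriv \<psi> = 0"
    by (simp add: algebra_simps power2_eq_square)
  thus ?thesis using Mpsi by (simp add: eq_neg_iff_add_eq_0)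
qed

lemma L_lemma:
  fixes M \<psi> :: "complex fps"
  assumes Mpsi: "M * \<psi> = 1" and n: "n \<ge> 1" and j: "j \<le> n"
  shows "(fps_deriv ((fps_X * M)^j) * \<psi>^n) $ (n-1) = (if j = n then of_nat n else 0)"
proof (cases "j = 0")
  case True thus ?thesis using n by simp
next
  case False
  define m where "m = n - j"
  have nj: "n = j + m" using j m_def by simp
  have dM: "fps_deriv M = - (M^2 * fps_deriv \<psi>)" using Mderiv[OF Mpsi] .
  have dG: "fps_deriv (fps_X * M) = M - fps_X * M^2 * fps_deriv \<psi>"
    using dM by (simp add: algebra_simps)
  have Mj: "M^j * \<psi>^j = 1" using Mpsi by (metis power_mult_distrib power_one)
  have e1: "fps_deriv ((fps_X * M)^j) * \<psi>^n
      = of_nat j * fps_X^(j-1) * ((M - fps_X * M^2 * fps_deriv \<psi>) * M^(j-1) * \<psi>^n)"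
  proof -
    have dd: "fps_deriv ((fps_X * M)^j) = of_nat j * (M - fps_X * M^2 * fps_deriv \<psi>) * (fps_X*M)^(j-1)"
      by (simp only: fps_deriv_power' dG)
    show ?thesis unfolding dd by (simp add: power_mult_distrib algebra_simps)
  qed
  show ?thesis
  proof (cases "m = 0")
    case True
    hence jn: "j = n" using nj by simp
    have "(M - fps_X * M^2 * fps_deriv \<psi>) * M^(j-1) * \<psi>^n
        = (M^j * \<psi>^j) * (1 - fps_X * M * fps_deriv \<psi>)"
    proof -
      obtain j' where j': "j = Suc j'" using False by (cases j) auto
      show ?thesis unfolding jn[symmetric] j' by (simp add: algebra_simps power2_eq_square)
    qed
    hence "fps_deriv ((fps_X * M)^j) * \<psi>^n = of_nat j * fps_X^(j-1) * ((M^j * \<psi>^j) * (1 - fps_X * M * fps_deriv \<psi>))"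
      by (simp only: e1)
    also have "... = fps_X^(j-1) * (of_nat j * (1 - fps_X * M * fps_deriv \<psi>))"
      by (simp add: Mj algebra_simps)
    finally have "fps_deriv ((fps_X * M)^j) * \<psi>^n = fps_X^(j-1) * (of_nat j * (1 - fps_X * M * fps_deriv \<psi>))" .
    thus ?thesis using jn n by (simp add: fps_X_power_mult_nth fps_of_nat_mult_nth)
  next
    case False
    then obtain m' where m': "m = Suc m'" by (cases m) auto
    have "(M - fps_X * M^2 * fps_deriv \<psi>) * M^(j-1) * \<psi>^n
        = (M^j * \<psi>^j) * \<psi>^m - fps_X * fps_deriv \<psi> * \<psi>^m' * ((M^j * \<psi>^j) * (M * \<psi>))"
    proof -
      obtain j' where j': "j = Suc j'" using \<open>j \<noteq> 0\<close> by (cases j) auto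
      show ?thesis unfolding nj j' m' by (simp add: algebra_simps power2_eq_square power_add)
    qed
    hence "fps_deriv ((fps_X * M)^j) * \<psi>^n = of_nat j * fps_X^(j-1) * ((M^j * \<psi>^j) * \<psi>^m - fps_X * fps_deriv \<psi> * \<psi>^m' * ((M^j * \<psi>^j) * (M * \<psi>)))"
      by (simp only: e1)
    also have "... = fps_X^(j-1) * (of_nat j * (\<psi>^m - fps_X * (fps_deriv \<psi> * \<psi>^m')))"
      by (simp add: Mj Mpsi algebra_simps)
    finally have FF: "fps_deriv ((fps_X * M)^j) * \<psi>^n = fps_X^(j-1) * (of_nat j * (\<psi>^m - fps_X * (fps_deriv \<psi> * \<psi>^m')))" .
    hence "(fps_deriv ((fps_X * M)^j) * \<psi>^n) $ (n-1) = (of_nat j * (\<psi>^m - fps_X * (fps_deriv \<psi> * \<psi>^m'))) $ (n - 1 - (j - 1))"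
    proof -
      have nl: "\<not> (n - 1 < j - 1)" using nj \<open>j \<noteq> 0\<close> by arith
      show ?thesis unfolding FF fps_X_power_mult_nth if_not_P[OF nl] ..
    qed
    also have "n - 1 - (j - 1) = m" using nj \<open>j \<noteq> 0\<close> by simp
    also have "(of_nat j * (\<psi>^m - fps_X * (fps_deriv \<psi> * \<psi>^m'))) $ m = of_nat j * (\<psi>^m $ m - (fps_deriv \<psi> * \<psi>^m') $ m')"
      using m' by (simp add: fps_of_nat_mult_nth)
    also have "(fps_deriv \<psi> * \<psi>^m') $ m' = \<psi>^m $ m"
    proof -
      have "fps_deriv (\<psi>^m) = of_nat m * (fps_deriv \<psi> * \<psi>^m')" by (simp only: fps_deriv_power') (simp add: m' mult.assoc)
      hence "of_nat m * \<psi>^m $ m = of_nat m * (fps_deriv \<psi> * \<psi>^m') $ m'"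
        using m' by (metis fps_deriv_nth fps_of_nat_mult_nth Suc_eq_plus1 mult.commute)
      moreover have "(of_nat m :: complex) \<noteq> 0" using m' by (simp only: of_nat_eq_0_iff)
      ultimately show ?thesis by simp
    qed
    finally show ?thesis using \<open>m \<noteq> 0\<close> nj by simp
  qed
qed

lemma key_coeff:
  fixes M \<psi> C :: "complex fps"
  assumes Mpsi: "M * \<psi> = 1" and comp: "C oo (fps_X * M) = M" and n: "n \<ge> 1"
  shows "of_nat n * C $ n = (fps_deriv M * \<psi>^n) $ (n-1)"
proof -
  define G where "G = fps_X * M"
  have Gz: "(G^j) $ i = 0" if "i < j" for i j
    using that unfolding G_def by (simp add: power_mult_distrib fps_X_power_mult_nth)
  define P where "P = (\<Sum>j\<le>n. fps_const (C$j) * G^j)"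
  have P_nth: "P $ i = M $ i" if "i \<le> n" for i
  proof -
    have "P $ i = (\<Sum>j\<le>n. C$j * (G^j $ i))" unfolding P_def by (simp add: fps_sum_nth)
    also have "... = (\<Sum>j\<in>{0..i}. C$j * (G^j $ i))"
      by (rule sum.mono_neutral_right) (use that Gz in auto)
    also have "... = (C oo G) $ i" by (simp add: fps_compose_nth)
    finally show ?thesis using comp G_def by simp
  qed
  have "(fps_deriv M * \<psi>^n) $ (n-1) = (fps_deriv P * \<psi>^n) $ (n-1)"
    unfolding fps_mult_nth using n by (intro sum.cong refl) (simp add: P_nth)
  also have "fps_deriv P * \<psi>^n = (\<Sum>j\<le>n. fps_const (C$j) * (fps_deriv (G^j) * \<psi>^n))"
    unfolding P_def by (simp only: fps_deriv_sum sum_distrib_right fps_deriv_mult_const_left mult.assoc)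
  also have "(\<Sum>j\<le>n. fps_const (C$j) * (fps_deriv (G^j) * \<psi>^n)) $ (n-1)
      = (\<Sum>j\<le>n. C$j * (if j = n then of_nat n else 0))"
    unfolding fps_sum_nth fps_mult_left_const_nth G_def using L_lemma[OF Mpsi n] by (intro sum.cong refl) simp
  also have "(\<lambda>j. C$j * (if j = n then of_nat n else 0)) = (\<lambda>j. if j = n then C$n * of_nat n else 0)"
    by auto
  also have "(\<Sum>j\<le>n. if j = n then C$n * of_nat n else 0) = C$n * of_nat n"
    by (simp only: sum.delta finite_atMost) simp
  finally show ?thesis by (simp add: mult.commute)
qed

lemma cumulant_coeff:
  fixes M \<psi> C :: "complex fps"
  assumes Mpsi: "M * \<psi> = 1" and comp: "C oo (fps_X * M) = M" and n: "n \<ge> 2"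
  shows "C $ n = - (\<psi>^(n-1) $ n) / of_nat (n - 1)"
proof -
  obtain k where k: "n = Suc (Suc k)" using n by (metis add_2_eq_Suc le_Suc_ex)
  have "fps_deriv M * \<psi>^n = - (fps_deriv \<psi> * \<psi>^k) * (M*\<psi>)^2"
    unfolding Mderiv[OF Mpsi] k by (simp add: algebra_simps power2_eq_square)
  hence e: "fps_deriv M * \<psi>^n = - (fps_deriv \<psi> * \<psi>^k)" using Mpsi by simp
  have "fps_deriv (\<psi>^(Suc k)) = of_nat (Suc k) * (fps_deriv \<psi> * \<psi>^k)"
    by (simp only: fps_deriv_power') (simp add: mult.assoc)
  hence "fps_deriv (\<psi>^(Suc k)) $ Suc k = of_nat (Suc k) * (fps_deriv \<psi> * \<psi>^k) $ Suc k"
    by (simp only: fps_of_nat_mult_nth)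
  hence e2: "of_nat (Suc (Suc k)) * \<psi>^(Suc k) $ (Suc (Suc k)) = of_nat (Suc k) * (fps_deriv \<psi> * \<psi>^k) $ Suc k"
    by (simp only: fps_deriv_nth Suc_eq_plus1)
  have "of_nat n * C $ n = (fps_deriv M * \<psi>^n) $ (n-1)" using key_coeff[OF Mpsi comp] n by simp
  hence "of_nat n * C $ n = - (fps_deriv \<psi> * \<psi>^k) $ Suc k" unfolding e using k by simp
  hence "of_nat (Suc k) * (of_nat (Suc (Suc k)) * C $ n) = - (of_nat (Suc (Suc k)) * \<psi>^(Suc k) $ (Suc (Suc k)))"
    unfolding e2 using k by simp
  hence "of_nat (Suc (Suc k)) * (of_nat (Suc k) * C $ n) = of_nat (Suc (Suc k)) * (- (\<psi>^(Suc k) $ (Suc (Suc k))))"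
    by (simp only: mult.left_commute mult_minus_right)
  hence "of_nat (Suc k) * C $ n = - (\<psi>^(Suc k) $ (Suc (Suc k)))"
    by (subst (asm) mult_left_cancel) (simp only: of_nat_eq_0_iff nat.distinct(1) not_False_eq_True)
  moreover have nz: "(of_nat (Suc k)::complex) \<noteq> 0"
    by (simp only: of_nat_eq_0_iff nat.distinct(1) not_False_eq_True)
  ultimately have "C $ n = - (\<psi>^(Suc k) $ (Suc (Suc k))) / of_nat (Suc k)"
    by (metis nonzero_mult_div_cancel_left)
  moreover have "n - 1 = Suc k" using k by simp
  ultimately show ?thesis using k by simp
qed

lemma the_cumulant:
  fixes M \<psi> :: "complex fps"
  assumes Mpsi: "M * \<psi> = 1" and M0: "M $ 0 = 1" and n: "n \<ge> 2"
  shows "fps_nth (THE C. fps_nth C 0 = 1 \<and> fps_compose C (fps_X * M) = M) n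
     = - (\<psi>^(n-1) $ n) / of_nat (n - 1)"
proof -
  define G where "G = fps_X * M"
  have G0: "G $ 0 = 0" and G1: "G $ 1 \<noteq> 0" using M0 by (simp_all add: G_def)
  define C0 where "C0 = M oo fps_inv G"
  have ex: "C0 $ 0 = 1 \<and> C0 oo G = M"
  proof
    show "C0 $ 0 = 1" using M0 by (simp add: C0_def)
    have "C0 oo G = M oo (fps_inv G oo G)" unfolding C0_def
      by (rule fps_compose_assoc[symmetric]) (simp_all add: G0 fps_inv_def)
    also have "... = M" using fps_inv[OF G0 G1] by simp
    finally show "C0 oo G = M" .
  qed
  have uniq: "C = C0" if "C $ 0 = 1 \<and> C oo G = M" for C
  proof (rule fps_ext)
    fix i show "C $ i = C0 $ i"
    proof (cases "i = 0")
      case True thus ?thesis using that ex by simp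
    next
      case False
      hence "of_nat i * C $ i = of_nat i * C0 $ i"
        using key_coeff[OF Mpsi, of C i] key_coeff[OF Mpsi, of C0 i] that ex G_def by simp
      thus ?thesis using False by simp
    qed
  qed
  have "(THE C. fps_nth C 0 = 1 \<and> fps_compose C G = M) = C0"
    by (rule the_equality[where P = "\<lambda>C. C $ 0 = 1 \<and> C oo G = M", OF ex]) (rule uniq)
  moreover have "C0 $ n = - (\<psi>^(n-1) $ n) / of_nat (n - 1)"
    using cumulant_coeff[OF Mpsi ex[THEN conjunct2, unfolded G_def] n] .
  ultimately show ?thesis unfolding G_def by simp
qed




lemma mp_D:
  assumes "p \<in> motzkin_paths n"
  shows "length p = Suc n" "p ! 0 = 0" "p ! n = 0" "\<And>i. i \<le> n \<Longrightarrow> p ! i \<ge> 0"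
    "\<And>i. 1 \<le> i \<Longrightarrow> i \<le> n \<Longrightarrow> p ! i - p ! (i - 1) \<in> {1, 0, -1}"
  using assms unfolding motzkin_paths_def by auto

lemma mp_I:
  assumes "length p = Suc n" "p ! 0 = 0" "p ! n = 0" "\<And>i. i \<le> n \<Longrightarrow> p ! i \<ge> 0"
    "\<And>i. 1 \<le> i \<Longrightarrow> i \<le> n \<Longrightarrow> p ! i - p ! (i - 1) \<in> {1, 0, -1}"
  shows "p \<in> motzkin_paths n"
  using assms unfolding motzkin_paths_def by auto

lemma mp_bound:
  assumes "p \<in> motzkin_paths n" "i \<le> n"
  shows "p ! i \<le> int i"
  using assms(2)
proof (induction i)
  case 0 thus ?case using mp_D[OF assms(1)] by simp
next
  case (Suc i)
  have "p ! Suc i - p ! i \<in> {1, 0, -1}" using mp_D(5)[OF assms(1), of "Suc i"] Suc.prems by simp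
  thus ?case using Suc by auto
qed

lemma finite_mp: "finite (motzkin_paths n)"
proof (rule finite_subset)
  show "motzkin_paths n \<subseteq> {xs. set xs \<subseteq> {0..int n} \<and> length xs = Suc n}"
  proof
    fix p assume p: "p \<in> motzkin_paths n"
    have "set p \<subseteq> {0..int n}"
    proof
      fix x assume "x \<in> set p"
      then obtain i where i: "i < length p" "p ! i = x" by (auto simp: in_set_conv_nth)
      hence "i \<le> n" using mp_D(1)[OF p] by simp
      thus "x \<in> {0..int n}" using i mp_D(4)[OF p] mp_bound[OF p] by force
    qed
    thus "p \<in> {xs. set xs \<subseteq> {0..int n} \<and> length xs = Suc n}" using mp_D(1)[OF p] by simp
  qed
  show "finite {xs. set xs \<subseteq> {0..int n} \<and> length xs = Suc n}"
    by (rule finite_lists_length_eq) simp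
qed

lemma mp0: "motzkin_paths 0 = {[0]}"
proof -
  have "p \<in> motzkin_paths 0 \<longleftrightarrow> p = [0]" for p
  proof
    assume "p \<in> motzkin_paths 0"
    thus "p = [0]" using mp_D(1,2)[of p 0] by (cases p) auto
  next
    assume "p = [0]" thus "p \<in> motzkin_paths 0" by (intro mp_I) auto
  qed
  thus ?thesis by blast
qed

definition cat :: "int list \<Rightarrow> int list \<Rightarrow> int list" where
  "cat q r = q @ tl r"

lemma cat_nth:
  assumes q: "q \<in> motzkin_paths j" and r: "r \<in> motzkin_paths m" and i: "i \<le> j + m"
  shows "cat q r ! i = (if i \<le> j then q ! i else r ! (i - j))"
proof (cases "i \<le> j")
  case True thus ?thesis using mp_D(1)[OF q] by (simp add: cat_def nth_append)
next
  case False
  have "cat q r ! i = tl r ! (i - Suc j)" using False mp_D(1)[OF q] by (simp add: cat_def nth_append)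
  also have "... = r ! (i - j)" using False mp_D(1)[OF r] i by (simp add: nth_tl Suc_diff_Suc)
  finally show ?thesis using False by simp
qed

lemma cat_nth_ge:
  assumes q: "q \<in> motzkin_paths j" and r: "r \<in> motzkin_paths m" and i: "i \<le> j + m" "j \<le> i"
  shows "cat q r ! i = r ! (i - j)"
  using cat_nth[OF q r i(1)] i mp_D(3)[OF q] mp_D(2)[OF r] by (cases "i = j") auto

lemma cat_length:
  assumes q: "q \<in> motzkin_paths j" and r: "r \<in> motzkin_paths m"
  shows "length (cat q r) = Suc (j + m)"
  using mp_D(1)[OF q] mp_D(1)[OF r] by (simp add: cat_def)

lemma mp_cat:
  assumes q: "q \<in> motzkin_paths j" and r: "r \<in> motzkin_paths m"
  shows "cat q r \<in> motzkin_paths (j + m)"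
proof (rule mp_I)
  show "length (cat q r) = Suc (j + m)" by (rule cat_length[OF q r])
  show "cat q r ! 0 = 0" using cat_nth[OF q r, of 0] mp_D(2)[OF q] by simp
  show "cat q r ! (j + m) = 0" using cat_nth_ge[OF q r, of "j+m"] mp_D(3)[OF r] by simp
  show "cat q r ! i \<ge> 0" if "i \<le> j + m" for i
    using cat_nth[OF q r that] mp_D(4)[OF q, of i] mp_D(4)[OF r, of "i - j"] that by auto
  show "cat q r ! i - cat q r ! (i - 1) \<in> {1, 0, -1}" if "1 \<le> i" "i \<le> j + m" for i
  proof (cases "i \<le> j")
    case True thus ?thesis using cat_nth[OF q r, of i] cat_nth[OF q r, of "i-1"] that mp_D(5)[OF q, of i] by auto
  next
    case False
    hence "cat q r ! i = r ! (i - j)" "cat q r ! (i - 1) = r ! (i - j - 1)"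
      using cat_nth_ge[OF q r, of i] cat_nth_ge[OF q r, of "i - 1"] that by auto
    thus ?thesis using mp_D(5)[OF r, of "i - j"] False that by auto
  qed
qed

lemma path_val_cat:
  assumes q: "q \<in> motzkin_paths j" and r: "r \<in> motzkin_paths m"
  shows "path_val a lam (cat q r) = path_val a lam q * path_val a lam r"
proof -
  have "path_val a lam (cat q r) = (\<Prod>i\<in>{1..j+m}. step_val a lam (cat q r) i)"
    unfolding path_val_def using cat_length[OF q r] by simp
  also have "... = (\<Prod>i\<in>{1..j}. step_val a lam (cat q r) i) * (\<Prod>i\<in>{j+1..j+m}. step_val a lam (cat q r) i)"
    by (rule prod.ub_add_nat) simp
  also have "(\<Prod>i\<in>{1..j}. step_val a lam (cat q r) i) = (\<Prod>i\<in>{1..j}. step_val a lam q i)"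
  proof (intro prod.cong refl)
    fix i assume i: "i \<in> {1..j}"
    have "cat q r ! i = q ! i" "cat q r ! (i - 1) = q ! (i - 1)"
      using cat_nth[OF q r, of i] cat_nth[OF q r, of "i - 1"] i by auto
    thus "step_val a lam (cat q r) i = step_val a lam q i" by (simp add: step_val_def)
  qed
  also have "(\<Prod>i\<in>{j+1..j+m}. step_val a lam (cat q r) i) = (\<Prod>i\<in>{1+j..m+j}. step_val a lam (cat q r) i)"
    by (simp add: add.commute)
  also have "... = (\<Prod>i\<in>{1..m}. step_val a lam (cat q r) (i + j))"
    by (rule prod.shift_bounds_cl_nat_ivl)
  also have "... = (\<Prod>i\<in>{1..m}. step_val a lam r i)"
  proof (intro prod.cong refl)
    fix i assume i: "i \<in> {1..m}"
    have "cat q r ! (i + j) = r ! i" "cat q r ! (i + j - 1) = r ! (i - 1)"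
      using cat_nth_ge[OF q r, of "i + j"] cat_nth_ge[OF q r, of "i + j - 1"] i by auto
    thus "step_val a lam (cat q r) (i + j) = step_val a lam r i" by (simp add: step_val_def)
  qed
  finally show ?thesis unfolding path_val_def using mp_D(1)[OF q] mp_D(1)[OF r] by simp
qed

lemma returns0_alt:
  assumes "p \<in> motzkin_paths n"
  shows "returns0 p = card {i\<in>{1..n}. p ! i = 0}"
  using mp_D(1)[OF assms] by (simp add: returns0_def)

lemma returns0_cat:
  assumes q: "q \<in> motzkin_paths j" and r: "r \<in> motzkin_paths m"
  shows "returns0 (cat q r) = returns0 q + returns0 r"
proof -
  have "{i\<in>{1..j+m}. cat q r ! i = 0} = {i\<in>{1..j}. q ! i = 0} \<union> (\<lambda>i. i + j) ` {i\<in>{1..m}. r ! i = 0}"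
  proof (intro equalityI subsetI)
    fix i assume i: "i \<in> {i\<in>{1..j+m}. cat q r ! i = 0}"
    show "i \<in> {i\<in>{1..j}. q ! i = 0} \<union> (\<lambda>i. i + j) ` {i\<in>{1..m}. r ! i = 0}"
    proof (cases "i \<le> j")
      case True thus ?thesis using i cat_nth[OF q r, of i] by auto
    next
      case False
      hence "i - j \<in> {i\<in>{1..m}. r ! i = 0}" using i cat_nth[OF q r, of i] by auto
      moreover have "i = (i - j) + j" using False by simp
      ultimately show ?thesis by blast
    qed
  next
    fix i assume "i \<in> {i\<in>{1..j}. q ! i = 0} \<union> (\<lambda>i. i + j) ` {i\<in>{1..m}. r ! i = 0}"
    thus "i \<in> {i\<in>{1..j+m}. cat q r ! i = 0}"
      using cat_nth[OF q r, of i] cat_nth_ge[OF q r, of i] by auto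
  qed
  moreover have "card ({i\<in>{1..j}. q ! i = 0} \<union> (\<lambda>i. i + j) ` {i\<in>{1..m}. r ! i = 0})
      = card {i\<in>{1..j}. q ! i = 0} + card ((\<lambda>i. i + j) ` {i\<in>{1..m}. r ! i = 0})"
    by (rule card_Un_disjoint) auto
  moreover have "card ((\<lambda>i. i + j) ` {i\<in>{1..m}. r ! i = 0}) = card {i\<in>{1..m}. r ! i = 0}"
    by (rule card_image) (simp add: inj_on_def)
  ultimately show ?thesis
    using returns0_alt[OF mp_cat[OF q r]] returns0_alt[OF q] returns0_alt[OF r] by simp
qed

lemma split_mp:
  assumes p: "p \<in> motzkin_paths n" and j: "j \<le> n" and pj: "p ! j = 0"
  shows "take (Suc j) p \<in> motzkin_paths j" "drop j p \<in> motzkin_paths (n - j)"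
    "cat (take (Suc j) p) (drop j p) = p"
proof -
  note D = mp_D[OF p]
  show "take (Suc j) p \<in> motzkin_paths j"
    using D j pj by (intro mp_I) (auto simp: nth_take)
  show "drop j p \<in> motzkin_paths (n - j)"
    using D j pj by (intro mp_I) (auto simp: nth_drop)
  show "cat (take (Suc j) p) (drop j p) = p"
    by (metis append_take_drop_id drop_Suc tl_drop cat_def)
qed

lemma cat_take_drop:
  assumes q: "q \<in> motzkin_paths j" and r: "r \<in> motzkin_paths m"
  shows "take (Suc j) (cat q r) = q" "drop j (cat q r) = r"
proof -
  show "take (Suc j) (cat q r) = q" using mp_D(1)[OF q] by (simp add: cat_def)
  show "drop j (cat q r) = r"
  proof (rule nth_equalityI)
    show "length (drop j (cat q r)) = length r" using cat_length[OF q r] mp_D(1)[OF r] by simp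
    fix i assume "i < length (drop j (cat q r))"
    hence "i \<le> m" using cat_length[OF q r] by simp
    thus "drop j (cat q r) ! i = r ! i"
      using cat_nth_ge[OF q r, of "j + i"] cat_length[OF q r] by (simp add: nth_drop)
  qed
qed





definition S :: "nat \<Rightarrow> nat \<Rightarrow> int list set" where
  "S n k = {p\<in>motzkin_paths n. returns0 p = k}"

definition Pn :: "(nat \<Rightarrow> complex) \<Rightarrow> (nat \<Rightarrow> complex) \<Rightarrow> nat \<Rightarrow> nat \<Rightarrow> complex" where
  "Pn a lam n k = (\<Sum>p\<in>S n k. path_val a lam p)"

definition fr :: "int list \<Rightarrow> nat" where
  "fr p = (LEAST i. 0 < i \<and> p ! i = 0)"

lemma finite_S: "finite (S n k)"
  unfolding S_def using finite_mp by simp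

lemma fr_props:
  assumes p: "p \<in> motzkin_paths n" and r: "returns0 p > 0"
  shows "1 \<le> fr p" "fr p \<le> n" "p ! fr p = 0" "\<And>i. 0 < i \<Longrightarrow> i < fr p \<Longrightarrow> p ! i \<noteq> 0"
proof -
  have "{i\<in>{1..n}. p ! i = 0} \<noteq> {}" using r returns0_alt[OF p] by (metis card.empty less_irrefl)
  then obtain i0 where i0: "i0 \<in> {1..n}" "p ! i0 = 0" by blast
  hence ex: "0 < i0 \<and> p ! i0 = 0" by simp
  have "0 < fr p \<and> p ! fr p = 0" unfolding fr_def by (rule LeastI[of "\<lambda>i. 0 < i \<and> p ! i = 0", OF ex])
  thus "1 \<le> fr p" "p ! fr p = 0" by auto
  have "fr p \<le> i0" unfolding fr_def by (rule Least_le[of "\<lambda>i. 0 < i \<and> p ! i = 0", OF ex])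
  thus "fr p \<le> n" using i0 by simp
  show "\<And>i. 0 < i \<Longrightarrow> i < fr p \<Longrightarrow> p ! i \<noteq> 0"
    unfolding fr_def using not_less_Least by blast
qed

lemma S1_single:
  assumes q: "q \<in> S j 1"
  shows "\<And>i. 0 < i \<Longrightarrow> i < j \<Longrightarrow> q ! i \<noteq> 0"
proof -
  have qm: "q \<in> motzkin_paths j" and c: "card {i\<in>{1..j}. q ! i = 0} = 1"
    using q returns0_alt[of q j] by (auto simp: S_def)
  have j1: "j \<ge> 1" using c by (cases j) auto
  have "j \<in> {i\<in>{1..j}. q ! i = 0}" using mp_D(3)[OF qm] j1 by simp
  then have eq: "{i\<in>{1..j}. q ! i = 0} = {j}" using c by (metis card_1_singletonE singletonD)
  fix i assume "0 < i" "i < j"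
  show "q ! i \<noteq> 0"
  proof
    assume "q ! i = 0"
    hence "i \<in> {i\<in>{1..j}. q ! i = 0}" using \<open>0 < i\<close> \<open>i < j\<close> by simp
    hence "i = j" unfolding eq by simp
    thus False using \<open>i < j\<close> by simp
  qed
qed

lemma fr_cat:
  assumes q: "q \<in> S j 1" and r: "r \<in> motzkin_paths m"
  shows "fr (cat q r) = j"
proof -
  have qm: "q \<in> motzkin_paths j" using q by (simp add: S_def)
  have j1: "j \<ge> 1"
  proof (rule ccontr)
    assume "\<not> j \<ge> 1" hence "j = 0" by simp
    thus False using q returns0_alt[of q 0] by (simp add: S_def)
  qed
  have cj: "cat q r ! j = 0" using cat_nth[OF qm r, of j] mp_D(3)[OF qm] by simp
  show ?thesis unfolding fr_def
  proof (rule Least_equality)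
    show "0 < j \<and> cat q r ! j = 0" using j1 cj by simp
    fix y assume y: "0 < y \<and> cat q r ! y = 0"
    show "j \<le> y"
    proof (rule ccontr)
      assume "\<not> j \<le> y"
      hence "cat q r ! y = q ! y" using cat_nth[OF qm r, of y] by simp
      thus False using S1_single[OF q, of y] y \<open>\<not> j \<le> y\<close> by simp
    qed
  qed
qed

lemma Pn_rec:
  "Pn a lam n (Suc k) = (\<Sum>j\<in>{1..n}. Pn a lam j 1 * Pn a lam (n - j) k)"
proof -
  define T where "T = (SIGMA j:{1..n}. S j 1 \<times> S (n - j) k)"
  define fw where "fw = (\<lambda>p. (fr p, take (Suc (fr p)) p, drop (fr p) p))"
  define bw where "bw = (\<lambda>(j::nat, q, r). cat q r)"
  have "Pn a lam n (Suc k) = (\<Sum>(j, q, r)\<in>T. path_val a lam q * path_val a lam r)"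
    unfolding Pn_def
  proof (rule sum.reindex_bij_witness[where i = bw and j = fw])
    fix p assume p: "p \<in> S n (Suc k)"
    have pm: "p \<in> motzkin_paths n" and rp: "returns0 p = Suc k" using p by (auto simp: S_def)
    note F = fr_props[OF pm, unfolded rp, OF zero_less_Suc]
    note SP = split_mp[OF pm F(2) F(3)]
    show "bw (fw p) = p" unfolding bw_def fw_def using SP(3) by simp
    have "returns0 (take (Suc (fr p)) p) = 1"
    proof -
      have "{i\<in>{1..fr p}. take (Suc (fr p)) p ! i = 0} = {fr p}"
      proof (intro equalityI subsetI)
        fix x assume x: "x \<in> {i\<in>{1..fr p}. take (Suc (fr p)) p ! i = 0}"
        hence "p ! x = 0" "1 \<le> x" "x \<le> fr p" by (auto simp: nth_take)
        thus "x \<in> {fr p}" using F(4)[of x] by (cases "x < fr p") auto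
      qed (use F in \<open>auto simp: nth_take\<close>)
      thus ?thesis using returns0_alt[OF SP(1)] by simp
    qed
    moreover have "returns0 (drop (fr p) p) = k"
      using returns0_cat[OF SP(1) SP(2)] SP(3) rp calculation by simp
    ultimately show "fw p \<in> T" unfolding fw_def T_def S_def using SP(1,2) F(1,2) by auto
    show "(\<lambda>(j, q, r). path_val a lam q * path_val a lam r) (fw p) = path_val a lam p"
      using path_val_cat[OF SP(1) SP(2)] SP(3) unfolding fw_def by simp
  next
    fix t assume t: "t \<in> T"
    then obtain j q r where t': "t = (j, q, r)" and j: "j \<in> {1..n}" and q: "q \<in> S j 1"
      and r: "r \<in> S (n - j) k" unfolding T_def by auto
    have qm: "q \<in> motzkin_paths j" and rm: "r \<in> motzkin_paths (n - j)"
      using q r by (auto simp: S_def)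
    show "fw (bw t) = t"
      unfolding t' bw_def fw_def using fr_cat[OF q rm] cat_take_drop[OF qm rm] by simp
    have "cat q r \<in> motzkin_paths n" using mp_cat[OF qm rm] j by simp
    moreover have "returns0 (cat q r) = Suc k" using returns0_cat[OF qm rm] q r by (simp add: S_def)
    ultimately show "bw t \<in> S n (Suc k)" unfolding t' bw_def S_def by simp
  qed
  also have "... = (\<Sum>j\<in>{1..n}. \<Sum>(q, r)\<in>S j 1 \<times> S (n - j) k. path_val a lam q * path_val a lam r)"
    unfolding T_def by (subst sum.Sigma) (auto simp: finite_S)
  also have "... = (\<Sum>j\<in>{1..n}. Pn a lam j 1 * Pn a lam (n - j) k)"
    unfolding Pn_def by (simp add: sum_product sum.cartesian_product)
  finally show ?thesis .
qed





lemma Fpow_zero: "(f::complex fps) $ 0 = 0 \<Longrightarrow> i < k \<Longrightarrow> (f^k) $ i = 0"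
proof (induction k arbitrary: i)
  case 0 thus ?case by simp
next
  case (Suc k)
  have "(f^Suc k) $ i = (\<Sum>t=0..i. f $ t * (f^k) $ (i - t))" by (simp add: fps_mult_nth)
  also have "... = 0"
  proof (intro sum.neutral ballI)
    fix t assume "t \<in> {0..i}"
    show "f $ t * (f^k) $ (i - t) = 0"
    proof (cases "t = 0")
      case True thus ?thesis using Suc.prems by simp
    next
      case False thus ?thesis using Suc.prems Suc.IH[of "i - t"] \<open>t \<in> {0..i}\<close> by simp
    qed
  qed
  finally show ?case .
qed

definition Fser :: "(nat \<Rightarrow> complex) \<Rightarrow> (nat \<Rightarrow> complex) \<Rightarrow> complex fps" where
  "Fser a lam = Abs_fps (\<lambda>j. Pn a lam j 1)"

lemma returns0_le: "p \<in> motzkin_paths n \<Longrightarrow> returns0 p \<le> n"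
proof -
  assume p: "p \<in> motzkin_paths n"
  have "card {i\<in>{1..n}. p ! i = 0} \<le> card {1..n}" by (rule card_mono) auto
  thus ?thesis using returns0_alt[OF p] by simp
qed

lemma returns0_pos: "p \<in> motzkin_paths n \<Longrightarrow> n > 0 \<Longrightarrow> returns0 p > 0"
proof -
  assume p: "p \<in> motzkin_paths n" and n: "n > 0"
  have "n \<in> {i\<in>{1..n}. p ! i = 0}" using n mp_D(3)[OF p] by simp
  moreover have "finite {i\<in>{1..n}. p ! i = 0}" by simp
  ultimately have "card {i\<in>{1..n}. p ! i = 0} > 0" using card_gt_0_iff by blast
  thus ?thesis using returns0_alt[OF p] by simp
qed

lemma r0: "returns0 [0] = 0" by (simp add: returns0_def)

lemma S0: "S 0 k = (if k = 0 then {[0]} else {})"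
  unfolding S_def mp0 using r0 by auto

lemma Pn_n0: "Pn a lam n 0 = (if n = 0 then 1 else 0)"
proof (cases "n = 0")
  case True thus ?thesis by (simp add: Pn_def S0 path_val_def)
next
  case False
  hence "S n 0 = {}" unfolding S_def using returns0_pos by fastforce
  thus ?thesis using False by (simp add: Pn_def)
qed

lemma Pn_0Suc: "Pn a lam 0 (Suc k) = 0"
  by (simp add: Pn_def S0)

lemma Pn_01: "Pn a lam 0 1 = 0"
  using Pn_0Suc[of a lam 0] by simp

lemma Fser0: "Fser a lam $ 0 = 0"
  by (simp add: Fser_def Pn_0Suc)

lemma Fser_nth: "Fser a lam $ j = Pn a lam j 1" by (simp add: Fser_def)

lemma Fpow: "(Fser a lam ^ k) $ n = Pn a lam n k"
proof (induction k arbitrary: n)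
  case 0 thus ?case by (simp add: Pn_n0)
next
  case (Suc k)
  have "(Fser a lam ^ Suc k) $ n = (\<Sum>j=0..n. Pn a lam j 1 * Pn a lam (n - j) k)"
    by (simp only: power_Suc fps_mult_nth Suc.IH Fser_nth)
  also have "... = (\<Sum>j=1..n. Pn a lam j 1 * Pn a lam (n - j) k)"
    by (subst sum.atLeast_Suc_atMost[of 0 n]) (simp_all only: Pn_01 One_nat_def Pn_0Suc mult_zero_left add_0_left le0)
  also have "... = Pn a lam n (Suc k)" by (rule Pn_rec[symmetric])
  finally show ?case .
qed

lemma moment_sum: "moment a lam n = (\<Sum>k\<le>n. Pn a lam n k)"
proof (cases "n = 0")
  case True thus ?thesis by (simp add: moment_def Pn_n0)
next
  case False
  have "moment a lam n = (\<Sum>p\<in>motzkin_paths n. path_val a lam p)" using False by (simp add: moment_def)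
  also have "... = (\<Sum>k\<in>{..n}. \<Sum>p\<in>{p\<in>motzkin_paths n. returns0 p = k}. path_val a lam p)"
    by (rule sum.group[symmetric]) (auto simp: finite_mp returns0_le)
  finally show ?thesis by (simp add: Pn_def S_def)
qed

lemma M_psi: "Abs_fps (moment a lam) * (1 - Fser a lam) = 1"
proof (rule fps_ext)
  fix n
  define F where "F = Fser a lam"
  define M where "M = Abs_fps (moment a lam)"
  have F0: "F $ 0 = 0" by (simp add: F_def Fser0)
  show "(Abs_fps (moment a lam) * (1 - Fser a lam)) $ n = (1::complex fps) $ n"
  proof (cases "n = 0")
    case True thus ?thesis by (simp add: moment_def Fser0)
  next
    case False
    define SN where "SN = (\<Sum>k\<le>n. F^k)"
    have MS: "M $ i = SN $ i" if "i \<le> n" for i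
    proof -
      have "M $ i = (\<Sum>k\<le>i. (F^k) $ i)" by (simp add: M_def moment_sum F_def Fpow)
      also have "... = (\<Sum>k\<le>n. (F^k) $ i)"
        by (rule sum.mono_neutral_left) (use that Fpow_zero[OF F0] in auto)
      finally show ?thesis by (simp add: SN_def fps_sum_nth)
    qed
    have "(M * (1 - F)) $ n = (SN * (1 - F)) $ n"
      unfolding fps_mult_nth by (intro sum.cong refl) (simp add: MS)
    also have "SN * (1 - F) = 1 - F ^ Suc n"
      unfolding SN_def one_diff_power_eq lessThan_Suc_atMost by (simp add: mult.commute)
    also have "(1 - F ^ Suc n) $ n = 0" using False Fpow_zero[OF F0, of n "Suc n"] by simp
    finally have "(M * (1 - F)) $ n = 0" .
    thus ?thesis using False unfolding M_def F_def by simp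
  qed
qed

lemma neg1_pow_nth: "((-1::complex fps)^k * f) $ n = (-1)^k * f $ n"
  by (induction k) (simp_all add: mult.assoc)





theorem mainTheorem1:
  fixes a lam :: "nat \<Rightarrow> complex" and n :: nat
  assumes "n \<ge> 2"
  shows "free_cumulant (moment a lam) n =
    (\<Sum>p\<in>motzkin_paths n.
       (-1) ^ (returns0 p - 1) / of_nat (n - 1) * of_nat ((n - 1) choose returns0 p)
       * path_val a lam p)"
proof -
  define F where "F = Fser a lam"
  define M where "M = Abs_fps (moment a lam)"
  define c where "c = (\<lambda>k. (-1) ^ (k - 1) / of_nat (n - 1) * of_nat ((n - 1) choose k) :: complex)"
  have Mpsi: "M * (1 - F) = 1" using M_psi by (simp add: M_def F_def)
  have M0: "M $ 0 = 1" by (simp add: M_def moment_def)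
  have "free_cumulant (moment a lam) n = - (((1 - F)^(n-1)) $ n) / of_nat (n-1)"
    unfolding free_cumulant_def using the_cumulant[OF Mpsi M0 assms] by (simp add: M_def)
  also have "(1 - F)^(n-1) = (\<Sum>k\<le>n-1. of_nat ((n-1) choose k) * (-F)^k * 1^(n-1-k))"
    using binomial_ring[of "-F" 1 "n-1"] by (simp add: add.commute)
  also have "(\<Sum>k\<le>n-1. of_nat ((n-1) choose k) * (-F)^k * 1^(n-1-k)) $ n
      = (\<Sum>k\<le>n-1. of_nat ((n-1) choose k) * ((-1)^k * Pn a lam n k))"
    unfolding fps_sum_nth
  proof (intro sum.cong refl)
    fix k
    have "of_nat ((n-1) choose k) * (-F)^k * 1^(n-1-k) = of_nat ((n-1) choose k) * ((-1)^k * F^k)"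
      by (subst power_minus) (simp only: power_one mult_1_right)
    thus "(of_nat ((n-1) choose k) * (-F)^k * 1^(n-1-k)) $ n = of_nat ((n-1) choose k) * ((-1)^k * Pn a lam n k)"
      by (simp only: fps_of_nat_mult_nth neg1_pow_nth F_def Fpow)
  qed
  also have "(\<Sum>k\<le>n-1. of_nat ((n-1) choose k) * ((-1)^k * Pn a lam n k))
      = (\<Sum>k\<le>n. of_nat ((n-1) choose k) * ((-1)^k * Pn a lam n k))"
    by (rule sum.mono_neutral_left) auto
  also have "- (\<Sum>k\<le>n. of_nat ((n-1) choose k) * ((-1)^k * Pn a lam n k)) / of_nat (n-1)
      = (\<Sum>k\<le>n. c k * Pn a lam n k)"
    unfolding sum_negf[symmetric] sum_divide_distrib
  proof (intro sum.cong refl)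
    fix k assume "k \<in> {..n}"
    show "- (of_nat ((n-1) choose k) * ((-1)^k * Pn a lam n k)) / of_nat (n-1) = c k * Pn a lam n k"
    proof (cases "k = 0")
      case True thus ?thesis using assms by (simp add: Pn_n0 c_def)
    next
      case False
      then obtain k' where k': "k = Suc k'" by (cases k) auto
      show ?thesis unfolding c_def k' by simp
    qed
  qed
  also have "(\<Sum>k\<le>n. c k * Pn a lam n k)
      = (\<Sum>k\<in>{..n}. \<Sum>p\<in>{p\<in>motzkin_paths n. returns0 p = k}. c (returns0 p) * path_val a lam p)"
    unfolding Pn_def S_def sum_distrib_left by (intro sum.cong refl) auto
  also have "... = (\<Sum>p\<in>motzkin_paths n. c (returns0 p) * path_val a lam p)"
    by (rule sum.group) (auto simp: finite_mp returns0_le)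
  finally show ?thesis by (simp add: c_def)
qed


end
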